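(* Let $a\ge b\ge2$ and $k$ be integers with $a+b+1\le k\le a+2b-1$. Then for every $(i,j)\in Q_3$ we have $w_2,w_3,w_4,w_6\in\mathcal{R}^k_{(a,b),(i,j)}$.
   Context: $\widehat{\mathfrak{su}}(3)_k$ fusion. Let $P_+^k=\{(\lambda_1,\lambda_2)\in\mathbb{Z}_{\ge0}^2:\lambda_1+\lambda_2\le k\}$. For $\lambda,\mu,\nu\in P_+^k$ set - $\mathcal{A}=\tfrac13[2(\lambda_1+\mu_1+\nu_2)+\lambda_2+\mu_2+\nu_1]$, - $\mathcal{B}=\tfrac13[\lambda_1+\mu_1+\nu_2+2(\lambda_2+\mu_2+\nu_1)]$, - $k_0^{\max}=\min(\mathcal{A},\mathcal{B})$, - $k_0^{\min}=\max(\lambda_1+\lambda_2,\mu_1+\mu_2,\nu_1+\nu_2,\mathcal{A}-\lambda_1,\mathcal{A}-\mu_1,\mathcal{A}-\nu_2,\mathcal{B}-\lambda_2,\mathcal{B}-\mu_2,\mathcal{B}-\nu_1)$. The fusion multiplicity is $N^{(k)\nu}_{\lambda,\mu}=\min(k_0^{\max},k)-k_0^{\min}+1$ if $\mathcal{A},\mathcal{B}$ are nonnegative integers, $k_0^{\max}\ge k_0^{\min}$ and $k\ge k_0^{\min}$; otherwise it is $0$. The set $\mathcal{R}^k_{\lambda,\mu}$ is $\{\nu\in P_+^k:N^{(k)\nu}_{\lambda,\mu}\ne0\}$. The candidate weights are $w_1=(a-1,b+2)$, $w_2=(a+2,b-1)$, $w_3=(a+1,b-2)$, $w_4=(a-2,b+1)$,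 $w_5=(a+1,b+1)$, $w_6=(a-1,b-1)$. The set $Q_3$ is defined by $Q_3=\{(p-2k+2a+2b,p+k-a-b):p\in\mathbb{Z},\ 2k-2a-2b\le p\le k-a-1\}$. *)

theory Defs
  imports Complex_Main
begin

type_synonym wt = "int \<times> int"

definition Pplus :: "int \<Rightarrow> wt set" where
  "Pplus k = {(l1, l2). 0 \<le> l1 \<and> 0 \<le> l2 \<and> l1 + l2 \<le> k}"

definition calA :: "wt \<Rightarrow> wt \<Rightarrow> wt \<Rightarrow> rat" where
  "calA lam mu nu = (2 * of_int (fst lam + fst mu + snd nu) + of_int (snd lam + snd mu + fst nu)) / 3"

definition calB :: "wt \<Rightarrow> wt \<Rightarrow> wt \<Rightarrow> rat" where
  "calB lam mu nu = (of_int (fst lam + fst mu + snd nu) + 2 * of_int (snd lam + snd mu + fst nu)) / 3"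

definition k0max :: "wt \<Rightarrow> wt \<Rightarrow> wt \<Rightarrow> rat" where
  "k0max lam mu nu = min (calA lam mu nu) (calB lam mu nu)"

definition k0min :: "wt \<Rightarrow> wt \<Rightarrow> wt \<Rightarrow> rat" where
  "k0min lam mu nu = (let A = calA lam mu nu; B = calB lam mu nu in
     Max {of_int (fst lam + snd lam), of_int (fst mu + snd mu), of_int (fst nu + snd nu),
          A - of_int (fst lam), A - of_int (fst mu), A - of_int (snd nu),
          B - of_int (snd lam), B - of_int (snd mu), B - of_int (fst nu)})"

definition fusion_mult :: "int \<Rightarrow> wt \<Rightarrow> wt \<Rightarrow> wt \<Rightarrow> int" where
  "fusion_mult k lam mu nu =
     (if calA lam mu nu \<in> \<int> \<and> calA lam mu nu \<ge> 0 \<and> calB lam mu nu \<in> \<int> \<and> calB lam mu nu \<ge> 0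
         \<and> k0max lam mu nu \<ge> k0min lam mu nu \<and> of_int k \<ge> k0min lam mu nu
      then \<lfloor>min (k0max lam mu nu) (of_int k) - k0min lam mu nu + 1\<rfloor>
      else 0)"

definition fusion_R :: "int \<Rightarrow> wt \<Rightarrow> wt \<Rightarrow> wt set" where
  "fusion_R k lam mu = {nu \<in> Pplus k. fusion_mult k lam mu nu \<noteq> 0}"

definition Q3 :: "int \<Rightarrow> int \<Rightarrow> int \<Rightarrow> wt set" where
  "Q3 k a b = {(p - 2*k + 2*a + 2*b, p + k - a - b) | p. 2*k - 2*a - 2*b \<le> p \<and> p \<le> k - a - 1}"

end

theory Submission
  imports Defs
begin

lemma key:
  fixes k X Y :: int and l m n :: wt
  assumes hA: "calA l m n = of_int X" and hB: "calB l m n = of_int Y"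
    and X0: "X \<ge> 0" and Y0: "Y \<ge> 0"
    and c: "\<And>t. t \<in> {fst l + snd l, fst m + snd m, fst n + snd n,
          X - fst l, X - fst m, X - snd n, Y - snd l, Y - snd m, Y - fst n} \<Longrightarrow> t \<le> min (min X Y) k"
  shows "fusion_mult k l m n \<noteq> 0"
proof -
  define M where "M = min (min X Y) k"
  have c': "\<And>t. t \<in> {fst l + snd l, fst m + snd m, fst n + snd n,
          X - fst l, X - fst m, X - snd n, Y - snd l, Y - snd m, Y - fst n} \<Longrightarrow> (of_int t::rat) \<le> of_int M"
    using c unfolding M_def by (simp only: of_int_le_iff)
  have m0: "(of_int (fst l + snd l)::rat) \<le> of_int M" by (rule c') simp
  have m1: "(of_int (fst m + snd m)::rat) \<le> of_int M" by (rule c') simp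
  have m2: "(of_int (fst n + snd n)::rat) \<le> of_int M" by (rule c') simp
  have m3: "(of_int (X - fst l)::rat) \<le> of_int M" by (rule c') simp
  have m4: "(of_int (X - fst m)::rat) \<le> of_int M" by (rule c') simp
  have m5: "(of_int (X - snd n)::rat) \<le> of_int M" by (rule c') simp
  have m6: "(of_int (Y - snd l)::rat) \<le> of_int M" by (rule c') simp
  have m7: "(of_int (Y - snd m)::rat) \<le> of_int M" by (rule c') simp
  have m8: "(of_int (Y - fst n)::rat) \<le> of_int M" by (rule c') simp
  have Mx: "k0min l m n \<le> of_int M"
    unfolding k0min_def Let_def hA hB
    apply (subst Max_le_iff)
      apply simp apply simp
    using m0 m1 m2 m3 m4 m5 m6 m7 m8 by (simp only: of_int_add of_int_diff Ball_def insert_iff empty_iff) blast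
  have mx: "k0max l m n = of_int (min X Y)" unfolding k0max_def hA hB by simp
  have M1: "of_int M \<le> k0max l m n" "of_int M \<le> (of_int k :: rat)"
    unfolding mx M_def by auto
  have "min (k0max l m n) (of_int k) - k0min l m n + 1 \<ge> 1"
    using Mx M1 by linarith
  hence fl: "\<lfloor>min (k0max l m n) (of_int k) - k0min l m n + 1\<rfloor> \<ge> 1" by linarith
  moreover have "k0max l m n \<ge> k0min l m n" "of_int k \<ge> k0min l m n"
    using Mx M1 by linarith+
  moreover have "calA l m n \<in> \<int>" "calB l m n \<in> \<int>" "calA l m n \<ge> 0" "calB l m n \<ge> 0"
    unfolding hA hB using X0 Y0 by auto
  ultimately have "fusion_mult k l m n = \<lfloor>min (k0max l m n) (of_int k) - k0min l m n + 1\<rfloor>"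
    unfolding fusion_mult_def by (intro if_P) blast
  thus ?thesis using fl by linarith
qed

theorem mainTheorem11:
  fixes a b k :: int
  assumes "a \<ge> b" and "b \<ge> 2" and "a + b + 1 \<le> k" and "k \<le> a + 2*b - 1"
  shows "\<forall>(i, j) \<in> Q3 k a b.
           (a + 2, b - 1) \<in> fusion_R k (a, b) (i, j) \<and>
           (a + 1, b - 2) \<in> fusion_R k (a, b) (i, j) \<and>
           (a - 2, b + 1) \<in> fusion_R k (a, b) (i, j) \<and>
           (a - 1, b - 1) \<in> fusion_R k (a, b) (i, j)"
proof (intro ballI, clarify)
  fix i j assume "(i, j) \<in> Q3 k a b"
  then obtain p where p: "2*k - 2*a - 2*b \<le> p" "p \<le> k - a - 1"
    and ij: "i = p - 2*k + 2*a + 2*b" "j = p + k - a - b" unfolding Q3_def by auto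
  have gen: "(u, v) \<in> fusion_R k (a, b) (i, j)"
    if "calA (a,b) (i,j) (u,v) = of_int (2*a+2*b-k+p+c1)"
       "calB (a,b) (i,j) (u,v) = of_int (a+b+p+c2)"
       "0 \<le> u" "0 \<le> v" "u + v \<le> k"
       "2*a+2*b-k+p+c1 \<ge> 0" "a+b+p+c2 \<ge> 0"
       "\<And>t. t \<in> {a + b, i + j, u + v,
          (2*a+2*b-k+p+c1) - a, (2*a+2*b-k+p+c1) - i, (2*a+2*b-k+p+c1) - v,
          (a+b+p+c2) - b, (a+b+p+c2) - j, (a+b+p+c2) - u} \<Longrightarrow>
          t \<le> min (min (2*a+2*b-k+p+c1) (a+b+p+c2)) k"
    for u v c1 c2
    unfolding fusion_R_def Pplus_def using that key[of "(a,b)" "(i,j)" "(u,v)" "2*a+2*b-k+p+c1" "a+b+p+c2" k] by auto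
  have "(a + 2, b - 1) \<in> fusion_R k (a, b) (i, j)"
  proof (rule gen[of _ _ "0" "1"])
    show "calA (a,b) (i,j) (a + 2, b - 1) = of_int (2*a+2*b-k+p+(0))"
      unfolding calA_def ij by (simp add: field_simps)
    show "calB (a,b) (i,j) (a + 2, b - 1) = of_int (a+b+p+(1))"
      unfolding calB_def ij by (simp add: field_simps)
  qed (use assms p ij in \<open>auto\<close>)
  moreover have "(a + 1, b - 2) \<in> fusion_R k (a, b) (i, j)"
  proof (rule gen[of _ _ "-1" "0"])
    show "calA (a,b) (i,j) (a + 1, b - 2) = of_int (2*a+2*b-k+p+(-1))"
      unfolding calA_def ij by (simp add: field_simps)
    show "calB (a,b) (i,j) (a + 1, b - 2) = of_int (a+b+p+(0))"
      unfolding calB_def ij by (simp add: field_simps)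
  qed (use assms p ij in \<open>auto\<close>)
  moreover have "(a - 2, b + 1) \<in> fusion_R k (a, b) (i, j)"
  proof (rule gen[of _ _ "0" "-1"])
    show "calA (a,b) (i,j) (a - 2, b + 1) = of_int (2*a+2*b-k+p+(0))"
      unfolding calA_def ij by (simp add: field_simps)
    show "calB (a,b) (i,j) (a - 2, b + 1) = of_int (a+b+p+(-1))"
      unfolding calB_def ij by (simp add: field_simps)
  qed (use assms p ij in \<open>auto\<close>)
  moreover have "(a - 1, b - 1) \<in> fusion_R k (a, b) (i, j)"
  proof (rule gen[of _ _ "-1" "-1"])
    show "calA (a,b) (i,j) (a - 1, b - 1) = of_int (2*a+2*b-k+p+(-1))"
      unfolding calA_def ij by (simp add: field_simps)
    show "calB (a,b) (i,j) (a - 1, b - 1) = of_int (a+b+p+(-1))"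
      unfolding calB_def ij by (simp add: field_simps)
  qed (use assms p ij in \<open>auto\<close>)
  ultimately show "(a + 2, b - 1) \<in> fusion_R k (a, b) (i, j) \<and>
        (a + 1, b - 2) \<in> fusion_R k (a, b) (i, j) \<and>
        (a - 2, b + 1) \<in> fusion_R k (a, b) (i, j) \<and>
        (a - 1, b - 1) \<in> fusion_R k (a, b) (i, j)" by blast
qed

end
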